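(* Let $n\ge 4$ and let $G$ be a graph having the maximum value of $cM_2$ among all connected graphs of order $n$. Then $$|M(G)|\le -\frac{2}{3}n+\frac{3}{2}+\frac{1}{6}\sqrt{52n^2-132n+81}.$$
   Context: All graphs are finite and simple. For a graph $G$ and a vertex $u$, $d_u(G)$ denotes the degree of $u$ in $G$. The complementary second Zagreb index of $G$ is $cM_2(G)=\sum_{uv\in E(G)}\left|(d_u(G))^2-(d_v(G))^2\right|$. $M(G)$ denotes the set of vertices of $G$ having the maximum degree of $G$. *)

theory Defs
  imports Complex_Main
begin

definition simple_graph :: "'a set \<Rightarrow> 'a set set \<Rightarrow> bool" where
  "simple_graph V E \<longleftrightarrow> finite V \<and>
     (\<forall>e\<in>E. \<exists>u v. e = {u, v} \<and> u \<noteq> v \<and> u \<in> V \<and> v \<in> V)"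

definition degree :: "'a set set \<Rightarrow> 'a \<Rightarrow> nat" where
  "degree E u = card {e \<in> E. u \<in> e}"

definition adj :: "'a set set \<Rightarrow> 'a \<Rightarrow> 'a \<Rightarrow> bool" where
  "adj E u v \<longleftrightarrow> {u, v} \<in> E"

definition connected_graph :: "'a set \<Rightarrow> 'a set set \<Rightarrow> bool" where
  "connected_graph V E \<longleftrightarrow> V \<noteq> {} \<and> (\<forall>u\<in>V. \<forall>v\<in>V. (adj E)\<^sup>*\<^sup>* u v)"

text \<open>Complementary second Zagreb index: sum over edges uv of |d_u^2 - d_v^2|.\<close>
definition cM2 :: "'a set set \<Rightarrow> int" where
  "cM2 E = (\<Sum>e\<in>E. (SOME r. \<exists>u v. e = {u, v} \<and>
                 r = \<bar>(int (degree E u))^2 - (int (degree E v))^2\<bar>))"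

definition max_deg_vertices :: "'a set \<Rightarrow> 'a set set \<Rightarrow> 'a set" where
  "max_deg_vertices V E = {v \<in> V. degree E v = Max (degree E ` V)}"

end

theory Submission
  imports Defs
begin



lemma some_val:
  "(SOME r. \<exists>u v. {a,b} = {u, v} \<and> r = \<bar>(int (degree E u))^2 - (int (degree E v))^2\<bar>)
   = \<bar>(int (degree E a))^2 - (int (degree E b))^2\<bar>"
proof -
  let ?P = "\<lambda>r. \<exists>u v. {a,b} = {u, v} \<and> r = \<bar>(int (degree E u))^2 - (int (degree E v))^2\<bar>"
  have "?P (\<bar>(int (degree E a))^2 - (int (degree E b))^2\<bar>)" by blast
  hence "?P (SOME r. ?P r)" by (rule someI)
  then obtain u v where "{a,b}={u,v}" and "(SOME r. ?P r) = \<bar>(int (degree E u))^2 - (int (degree E v))^2\<bar>" by blast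
  then show ?thesis by (auto simp: doubleton_eq_iff abs_minus_commute)
qed

lemma sg_finite: "simple_graph V E \<Longrightarrow> finite V" by (simp add: simple_graph_def)
lemma sg_edge: "simple_graph V E \<Longrightarrow> e \<in> E \<Longrightarrow> \<exists>u v. e = {u,v} \<and> u \<noteq> v \<and> u \<in> V \<and> v \<in> V"
  by (simp add: simple_graph_def)
lemma sg_sub: "simple_graph V E \<Longrightarrow> e \<in> E \<Longrightarrow> e \<subseteq> V"
  using sg_edge by fastforce

lemma simple_finite_E:
  assumes "simple_graph V E" shows "finite E"
proof -
  have "E \<subseteq> Pow V"
  proof
    fix e assume "e \<in> E"
    then obtain u v where "e = {u,v}" "u \<in> V" "v \<in> V" using assms unfolding simple_graph_def by meson
    then show "e \<in> Pow V" by simp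
  qed
  moreover have "finite V" using assms unfolding simple_graph_def by blast
  ultimately show ?thesis by (meson finite_Pow_iff finite_subset)
qed

lemma degree_le:
  assumes "simple_graph V E" "x \<in> V" shows "degree E x \<le> card V - 1"
proof -
  have fin: "finite V" using assms unfolding simple_graph_def by blast
  have "{e \<in> E. x \<in> e} \<subseteq> (\<lambda>y. {x,y}) ` (V - {x})"
  proof
    fix e assume "e \<in> {e \<in> E. x \<in> e}"
    then obtain u v where "e = {u,v}" "u \<noteq> v" "u \<in> V" "v \<in> V" "x \<in> e" "e \<in> E"
      using assms unfolding simple_graph_def by blast
    then show "e \<in> (\<lambda>y. {x,y}) ` (V - {x})" by (auto simp: insert_commute)
  qed
  hence "degree E x \<le> card ((\<lambda>y. {x,y}) ` (V - {x}))"
    unfolding degree_def using fin by (intro card_mono) auto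
  also have "\<dots> \<le> card (V - {x})" by (rule card_image_le) (use fin in auto)
  also have "\<dots> = card V - 1" using assms(2) fin by simp
  finally show ?thesis .
qed

lemma cubic_bound:
  fixes d N :: real assumes "0 \<le> d" "d \<le> N"
  shows "d * (N^2 - d^2) \<le> 39/100 * N^3"
proof -
  define a :: real where "a = 577/1000"
  have id: "39 * N^3 - 100 * d * N^2 + 100 * d^3
      = (d - a*N)^2 * (100*d + 200*a*N) + (300*a^2 - 100) * d * N^2 + (39 - 200*a^3) * N^3"
    by (simp add: algebra_simps power2_eq_square power3_eq_cube)
  have N0: "0 \<le> N" using assms by linarith
  have "0 \<le> (d - a*N)^2 * (100*d + 200*a*N)" using assms N0 unfolding a_def by simp
  moreover have "(300*a^2 - 100) * d * N^2 \<ge> (300*a^2 - 100) * N * N^2"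
  proof -
    have "(300*a^2 - 100) \<le> 0" unfolding a_def by (simp add: power2_eq_square)
    moreover have "d * N^2 \<le> N * N^2" using assms by (simp add: mult_right_mono)
    ultimately show ?thesis by (metis mult.assoc mult_left_mono_neg)
  qed
  moreover have "(300*a^2 - 100) * N * N^2 + (39 - 200*a^3) * N^3 \<ge> 0"
  proof -
    have "(300*a^2 - 100) * N * N^2 + (39 - 200*a^3) * N^3 = ((300*a^2 - 100) + (39 - 200*a^3)) * N^3"
      by (simp add: algebra_simps power2_eq_square power3_eq_cube)
    moreover have "(300*a^2 - 100) + (39 - 200*a^3) \<ge> 0" unfolding a_def by (simp add: power2_eq_square power3_eq_cube)
    ultimately show ?thesis using N0 by simp
  qed
  ultimately have "39 * N^3 - 100 * d * N^2 + 100 * d^3 \<ge> 0" using id by linarith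
  moreover have "d * (N^2 - d^2) = d * N^2 - d^3"
    by (simp add: algebra_simps power2_eq_square power3_eq_cube)
  moreover have "100 * d * N^2 = 100 * (d * N^2)" by simp
  ultimately show ?thesis by linarith
qed



lemma cM2_upper:
  assumes sg: "simple_graph V E" and ne: "V \<noteq> {}"
  shows "cM2 E \<le> (\<Sum>x\<in>V. int (degree E x) * ((int (Max (degree E ` V)))^2 - (int (degree E x))^2))"
proof -
  define M where "M = Max (degree E ` V)"
  define h where "h x = (int M)^2 - (int (degree E x))^2" for x
  have finV: "finite V" using sg by (rule sg_finite)
  have finE: "finite E" using sg by (rule simple_finite_E)
  have dle: "degree E x \<le> M" if "x \<in> V" for x
    unfolding M_def using finV that by (intro Max_ge) auto
  have hnn: "0 \<le> h x" if "x \<in> V" for x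
    unfolding h_def using dle[OF that] by (simp add: power_mono)
  have step: "(SOME r. \<exists>u v. e = {u, v} \<and> r = \<bar>(int (degree E u))^2 - (int (degree E v))^2\<bar>)
      \<le> (\<Sum>x\<in>e. h x)" if "e \<in> E" for e
  proof -
    obtain u v where e: "e = {u,v}" "u \<noteq> v" "u \<in> V" "v \<in> V"
      using sg_edge[OF sg \<open>e \<in> E\<close>] by blast
    have "(SOME r. \<exists>u v. e = {u, v} \<and> r = \<bar>(int (degree E u))^2 - (int (degree E v))^2\<bar>)
        = \<bar>(int (degree E u))^2 - (int (degree E v))^2\<bar>" unfolding e(1) by (rule some_val)
    also have "\<dots> \<le> h u + h v"
      using hnn[OF e(3)] hnn[OF e(4)] unfolding h_def by (simp add: abs_le_iff)
    also have "\<dots> = (\<Sum>x\<in>e. h x)" unfolding e(1) using e(2) by simp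
    finally show ?thesis .
  qed
  have "cM2 E \<le> (\<Sum>e\<in>E. \<Sum>x\<in>e. h x)"
    unfolding cM2_def by (rule sum_mono) (rule step)
  also have "\<dots> = (\<Sum>e\<in>E. \<Sum>x\<in>{x. x \<in> V \<and> x \<in> e}. h x)"
  proof (rule sum.cong[OF refl])
    fix e assume "e \<in> E"
    then have "e \<subseteq> V" using sg_sub[OF sg] by blast
    then have "{x. x \<in> V \<and> x \<in> e} = e" by auto
    then show "(\<Sum>x\<in>e. h x) = (\<Sum>x\<in>{x. x \<in> V \<and> x \<in> e}. h x)" by simp
  qed
  also have "\<dots> = (\<Sum>x\<in>V. \<Sum>e\<in>{e. e \<in> E \<and> x \<in> e}. h x)"
    by (rule sum.swap_restrict[OF finE finV])
  also have "\<dots> = (\<Sum>x\<in>V. int (degree E x) * h x)"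
    by (simp add: degree_def)
  finally show ?thesis unfolding h_def M_def .
qed



lemma construction:
  assumes finV: "finite V" and AV: "A \<subseteq> V" and cA: "card A = t" and t1: "1 \<le> t" and tn: "t < card V"
  shows "\<exists>E'. simple_graph V E' \<and> connected_graph V E' \<and>
     int t * int (card V - t) * ((int (card V) - 1)^2 - (int t)^2) \<le> cM2 E'"
proof -
  define n where "n = card V"
  define E' where "E' = {{a,v} | a v. a \<in> A \<and> v \<in> V \<and> a \<noteq> v}"
  have finA: "finite A" using finV AV finite_subset by blast
  have sg: "simple_graph V E'"
    unfolding simple_graph_def E'_def using finV AV by blast
  have Ane: "A \<noteq> {}" using cA t1 by auto
  then obtain a0 where a0: "a0 \<in> A" by blast
  have adjE: "adj E' u v" if "u \<in> A" "v \<in> V" "u \<noteq> v" for u v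
    unfolding adj_def E'_def using that by blast
  have adjE': "adj E' v u" if "u \<in> A" "v \<in> V" "u \<noteq> v" for u v
    unfolding adj_def E'_def using that by (auto simp: insert_commute)
  have conn: "connected_graph V E'"
    unfolding connected_graph_def
  proof (intro conjI ballI)
    show "V \<noteq> {}" using a0 AV by blast
  next
    fix u v assume u: "u \<in> V" and v: "v \<in> V"
    show "(adj E')\<^sup>*\<^sup>* u v"
    proof (cases "u = v")
      case True then show ?thesis by simp
    next
      case False
      show ?thesis
      proof (cases "u \<in> A")
        case True then show ?thesis using adjE[OF True v False] by blast
      next
        case uA: False
        show ?thesis
        proof (cases "v \<in> A")
          case True then show ?thesis using adjE'[OF True u] False by blast
        next
          case False
          have "u \<noteq> a0" "v \<noteq> a0" using uA False a0 by auto
          then have "adj E' u a0" "adj E' a0 v" using adjE adjE' a0 u v by auto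
          then show ?thesis by (meson rtranclp.rtrancl_into_rtrancl r_into_rtranclp)
        qed
      qed
    qed
  qed
  have degA: "degree E' a = n - 1" if "a \<in> A" for a
  proof -
    have "{e \<in> E'. a \<in> e} = (\<lambda>y. {a,y}) ` (V - {a})"
    proof
      show "{e \<in> E'. a \<in> e} \<subseteq> (\<lambda>y. {a,y}) ` (V - {a})"
      proof
        fix e assume "e \<in> {e \<in> E'. a \<in> e}"
        then obtain a' v where e: "e = {a',v}" "a' \<in> A" "v \<in> V" "a' \<noteq> v" "a \<in> e"
          unfolding E'_def by blast
        show "e \<in> (\<lambda>y. {a,y}) ` (V - {a})"
        proof (cases "a = a'")
          case True then show ?thesis using e by auto
        next
          case False then have "a = v" using e by auto
          then show ?thesis using e AV by (auto simp: insert_commute)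
        qed
      qed
    next
      show "(\<lambda>y. {a,y}) ` (V - {a}) \<subseteq> {e \<in> E'. a \<in> e}"
        unfolding E'_def using that by blast
    qed
    moreover have "inj_on (\<lambda>y. {a,y}) (V - {a})"
      by (rule inj_onI) (auto simp: doubleton_eq_iff)
    ultimately have "degree E' a = card (V - {a})"
      unfolding degree_def by (simp add: card_image)
    also have "\<dots> = n - 1" unfolding n_def using that AV finV by auto
    finally show ?thesis .
  qed
  have degB: "degree E' b = t" if "b \<in> V - A" for b
  proof -
    have "{e \<in> E'. b \<in> e} = (\<lambda>a. {a,b}) ` A"
    proof
      show "{e \<in> E'. b \<in> e} \<subseteq> (\<lambda>a. {a,b}) ` A"
      proof
        fix e assume "e \<in> {e \<in> E'. b \<in> e}"
        then obtain a' v where e: "e = {a',v}" "a' \<in> A" "v \<in> V" "a' \<noteq> v" "b \<in> e"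
          unfolding E'_def by blast
        have "b \<noteq> a'" using that e by auto
        then have "b = v" using e by auto
        then show "e \<in> (\<lambda>a. {a,b}) ` A" using e by auto
      qed
    next
      show "(\<lambda>a. {a,b}) ` A \<subseteq> {e \<in> E'. b \<in> e}"
        unfolding E'_def using that AV by blast
    qed
    moreover have "inj_on (\<lambda>a. {a,b}) A"
      using that by (intro inj_onI) (auto simp: doubleton_eq_iff)
    ultimately show ?thesis unfolding degree_def using cA by (simp add: card_image)
  qed
  define c :: int where "c = (int n - 1)^2 - (int t)^2"
  define val where "val e = (SOME r. \<exists>u v. e = {u, v} \<and> r = \<bar>(int (degree E' u))^2 - (int (degree E' v))^2\<bar>)" for e
  have cM2eq: "cM2 E' = (\<Sum>e\<in>E'. val e)" unfolding cM2_def val_def by simp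
  have valnn: "0 \<le> val e" if eE: "e \<in> E'" for e
  proof -
    obtain u v where "e = {u,v}" using eE unfolding E'_def by blast
    then show ?thesis unfolding val_def by (simp only: some_val abs_ge_zero)
  qed
  define EB where "EB = (\<lambda>(a,b). {a,b}) ` (A \<times> (V - A))"
  have EBsub: "EB \<subseteq> E'"
  proof
    fix e assume "e \<in> EB"
    then obtain a b where "e = {a,b}" "a \<in> A" "b \<in> V" "b \<notin> A" unfolding EB_def by auto
    then show "e \<in> E'" unfolding E'_def by blast
  qed
  have finE: "finite E'" using sg by (rule simple_finite_E)
  have injEB: "inj_on (\<lambda>(a,b). {a,b}) (A \<times> (V - A))"
    by (rule inj_onI) (auto simp: doubleton_eq_iff)
  have cardEB: "card EB = t * (n - t)"
  proof -
    have "card EB = card (A \<times> (V - A))" unfolding EB_def using injEB by (simp add: card_image)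
    also have "\<dots> = t * (n - t)" using cA finA finV AV unfolding n_def by (simp add: card_Diff_subset)
    finally show ?thesis .
  qed
  have valEB: "val e = c" if eB: "e \<in> EB" for e
  proof -
    obtain a b where ab: "e = {a,b}" "a \<in> A" "b \<in> V - A" using eB unfolding EB_def by auto
    have "val e = \<bar>(int (degree E' a))^2 - (int (degree E' b))^2\<bar>"
      unfolding val_def ab(1) by (rule some_val)
    also have "\<dots> = \<bar>(int (n - 1))^2 - (int t)^2\<bar>" using degA[OF ab(2)] degB[OF ab(3)] by simp
    also have "\<dots> = c"
    proof -
      have "n \<ge> 1" using tn n_def by simp
      then have "int (n - 1) = int n - 1" by simp
      moreover have "int t \<le> int n - 1" using tn n_def by simp
      moreover have "0 \<le> int t" by simp
      ultimately have "(int t)^2 \<le> (int (n - 1))^2" by (simp add: power_mono)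
      then show ?thesis unfolding c_def using \<open>int (n - 1) = int n - 1\<close> by simp
    qed
    finally show ?thesis .
  qed
  have "(\<Sum>e\<in>EB. val e) \<le> (\<Sum>e\<in>E'. val e)"
    by (rule sum_mono2[OF finE EBsub]) (use valnn in blast)
  moreover have "(\<Sum>e\<in>EB. val e) = int (t * (n - t)) * c"
    using valEB cardEB by simp
  ultimately have "int t * int (n - t) * c \<le> cM2 E'" using cM2eq by simp
  then show ?thesis using sg conn unfolding c_def n_def by blast
qed



lemma polyj:
  fixes s t0 j :: real
  assumes "s \<ge> 0"
    and "10000*((s+t0)*((3*(s+t0)+j) - (s+t0))*(((3*(s+t0)+j) - 1)^2 - (s+t0)^2)) - 39*(3*(s+t0)+j - 1)^3*(47*(3*(s+t0)+j) + 2)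
      = c0 + c1*s + c2*s^2 + c3*s^3 + c4*s^4"
    and "c0 \<ge> 0" "c1 \<ge> 0" "c2 \<ge> 0" "c3 \<ge> 0" "c4 \<ge> 0"
  shows "39/100*((3*(s+t0)+j) - 1)^3*(47/100*(3*(s+t0)+j) + 2/100) \<le> (s+t0)*((3*(s+t0)+j) - (s+t0))*(((3*(s+t0)+j) - 1)^2 - (s+t0)^2)"
proof -
  have "0 \<le> c0 + c1*s + c2*s^2 + c3*s^3 + c4*s^4" using assms by simp
  then show ?thesis using assms(2) by (simp add: field_simps)
qed

lemma poly0: "(s::real) \<ge> 0 \<Longrightarrow> 10000*((s+2)*((3*(s+2)+0) - (s+2))*(((3*(s+2)+0) - 1)^2 - (s+2)^2)) - 39*(3*(s+2)+0 - 1)^3*(47*(3*(s+2)+0) + 2)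
      = 295500 + 580525*s + 407465*s^2 + 118583*s^3 + 11527*s^4"
  by (simp add: algebra_simps power2_eq_square power3_eq_cube power4_eq_xxxx)
lemma poly1: "(s::real) \<ge> 0 \<Longrightarrow> 10000*((s+1)*((3*(s+1)+1) - (s+1))*(((3*(s+1)+1) - 1)^2 - (s+1)^2)) - 39*(3*(s+1)+1 - 1)^3*(47*(3*(s+1)+1) + 2)
      = 39930 + 131317*s + 154371*s^2 + 74511*s^3 + 11527*s^4"
  by (simp add: algebra_simps power2_eq_square power3_eq_cube power4_eq_xxxx)
lemma poly2: "(s::real) \<ge> 0 \<Longrightarrow> 10000*((s+1)*((3*(s+1)+2) - (s+1))*(((3*(s+1)+2) - 1)^2 - (s+1)^2)) - 39*(3*(s+1)+2 - 1)^3*(47*(3*(s+1)+2) + 2)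
      = 8448 + 97072*s + 149900*s^2 + 76547*s^3 + 11527*s^4"
  by (simp add: algebra_simps power2_eq_square power3_eq_cube power4_eq_xxxx)

lemma poly_bound:
  fixes n :: nat assumes n4: "n \<ge> 4"
  shows "39/100*(real n - 1)^3*(47/100*real n + 2/100)
     \<le> real (n div 3) * (real n - real (n div 3)) * ((real n - 1)^2 - (real (n div 3))^2)"
proof -
  define t where "t = n div 3"
  have nt: "n = 3*t + n mod 3" unfolding t_def by simp
  have "n mod 3 < 3" by simp
  then consider "n mod 3 = 0" | "n mod 3 = 1" | "n mod 3 = 2" by linarith
  then have "39/100*(real n - 1)^3*(47/100*real n + 2/100)
     \<le> real t * (real n - real t) * ((real n - 1)^2 - (real t)^2)"
  proof cases
    case 1
    then have "t \<ge> 2" using nt n4 by linarith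
    define s where "s = real t - 2"
    have s0: "s \<ge> 0" using \<open>t \<ge> 2\<close> unfolding s_def by simp
    have e1: "real n = 3*(s+2)+0" "real t = s+2" unfolding s_def using nt 1
      by (metis add.right_neutral of_nat_add of_nat_mult of_nat_numeral diff_add_cancel, simp)
    show ?thesis unfolding e1 by (rule polyj[OF s0 poly0[OF s0]]) simp_all
  next
    case 2
    then have "t \<ge> 1" using nt n4 by linarith
    define s where "s = real t - 1"
    have s0: "s \<ge> 0" using \<open>t \<ge> 1\<close> unfolding s_def by simp
    have e1: "real n = 3*(s+1)+1" "real t = s+1" unfolding s_def using nt 2
      by (metis of_nat_1 of_nat_add of_nat_mult of_nat_numeral diff_add_cancel, simp)
    show ?thesis unfolding e1 by (rule polyj[OF s0 poly1[OF s0]]) simp_all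
  next
    case 3
    then have "t \<ge> 1" using nt n4 by linarith
    define s where "s = real t - 1"
    have s0: "s \<ge> 0" using \<open>t \<ge> 1\<close> unfolding s_def by simp
    have e1: "real n = 3*(s+1)+2" "real t = s+1" unfolding s_def using nt 3
      by (metis of_nat_add of_nat_mult of_nat_numeral diff_add_cancel, simp)
    show ?thesis unfolding e1 by (rule polyj[OF s0 poly2[OF s0]]) simp_all
  qed
  then show ?thesis unfolding t_def .
qed

lemma sqrt_bound:
  fixes n :: real assumes "n \<ge> 4"
  shows "53/100*n - 2/100 \<le> - (2/3) * n + 3/2 + (1/6) * sqrt (52 * n^2 - 132 * n + 81)"
proof -
  have "(718/100*n - 912/100)^2 \<le> 52 * n^2 - 132 * n + 81"
  proof -
    have "0 \<le> n * (n - 4)" using assms by simp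
    then have "0 \<le> 52 * n^2 - 132 * n + 81 - (718/100*n - 912/100)^2"
      by (simp add: power2_eq_square algebra_simps) (use assms in linarith)
    then show ?thesis by linarith
  qed
  then have "718/100*n - 912/100 \<le> sqrt (52 * n^2 - 132 * n + 81)" by (rule real_le_rsqrt)
  then show ?thesis by linarith
qed



theorem proposition3:
  fixes V :: "'a set" and E :: "'a set set" and n :: nat
  assumes "n \<ge> 4"
    and "simple_graph V E" and "connected_graph V E" and "card V = n"
    and "\<forall>(V' :: 'a set) E'. simple_graph V' E' \<and> connected_graph V' E' \<and> card V' = n
            \<longrightarrow> cM2 E' \<le> cM2 E"
  shows "real (card (max_deg_vertices V E))
           \<le> - (2/3) * real n + 3/2 + (1/6) * sqrt (52 * (real n)^2 - 132 * real n + 81)"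
proof -
  note n4 = assms(1) and sg = assms(2) and cV = assms(4) and ext = assms(5)
  have finV: "finite V" using sg by (rule sg_finite)
  have Vne: "V \<noteq> {}" using assms(3) unfolding connected_graph_def by simp
  define t where "t = n div 3"
  have t1: "1 \<le> t" "t < n" using n4 unfolding t_def by auto
  obtain A where A: "A \<subseteq> V" "card A = t" "finite A"
    using obtain_subset_with_card_n[of t V] t1 cV by auto
  obtain E' where E': "simple_graph V E'" "connected_graph V E'"
    "int t * int (card V - t) * ((int (card V) - 1)^2 - (int t)^2) \<le> cM2 E'"
    using construction[OF finV A(1) A(2) t1(1)] t1 cV by auto
  have "cM2 E' \<le> cM2 E" using ext E'(1,2) cV by blast
  define Mx where "Mx = Max (degree E ` V)"
  define Ms where "Ms = max_deg_vertices V E"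
  define k where "k = card Ms"
  define C :: real where "C = 39/100 * (real n - 1)^3"
  have L: "int t * int (n - t) * ((int n - 1)^2 - (int t)^2)
      \<le> (\<Sum>x\<in>V. int (degree E x) * ((int Mx)^2 - (int (degree E x))^2))"
    using E'(3)[unfolded cV] \<open>cM2 E' \<le> cM2 E\<close> cM2_upper[OF sg Vne] unfolding Mx_def by linarith
  have Lr: "real t * (real n - real t) * ((real n - 1)^2 - (real t)^2)
      \<le> (\<Sum>x\<in>V. real (degree E x) * ((real Mx)^2 - (real (degree E x))^2))"
  proof -
    have "real_of_int (int t * int (n - t) * ((int n - 1)^2 - (int t)^2))
        \<le> real_of_int (\<Sum>x\<in>V. int (degree E x) * ((int Mx)^2 - (int (degree E x))^2))"
      using L by linarith
    then show ?thesis using t1 by (simp add: of_nat_diff)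
  qed
  have MxV: "Mx \<in> degree E ` V" unfolding Mx_def using finV Vne by (intro Max_in) auto
  then obtain y where y: "y \<in> V" "Mx = degree E y" by blast
  have Mxle: "Mx \<le> n - 1" using degree_le[OF sg y(1)] y cV by simp
  have dle: "degree E x \<le> Mx" if "x \<in> V" for x
    unfolding Mx_def using finV that by (intro Max_ge) auto
  have n1: "real (n - 1) = real n - 1" using n4 by (simp add: of_nat_diff)
  have termb: "real (degree E x) * ((real Mx)^2 - (real (degree E x))^2) \<le> (if x \<in> Ms then 0 else C)"
    if xV: "x \<in> V" for x
  proof (cases "x \<in> Ms")
    case True
    then have "degree E x = Mx" unfolding Ms_def max_deg_vertices_def Mx_def by simp
    then show ?thesis using True by simp
  next
    case False
    have "real (degree E x) * ((real Mx)^2 - (real (degree E x))^2)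
        \<le> real (degree E x) * ((real n - 1)^2 - (real (degree E x))^2)"
    proof (rule mult_left_mono)
      have "real Mx \<le> real n - 1" using Mxle n1 by (metis of_nat_mono)
      then have "(real Mx)^2 \<le> (real n - 1)^2" by (simp add: power_mono)
      then show "(real Mx)^2 - (real (degree E x))^2 \<le> (real n - 1)^2 - (real (degree E x))^2" by simp
    qed simp
    also have "\<dots> \<le> C" unfolding C_def
    proof (rule cubic_bound)
      show "0 \<le> real (degree E x)" by simp
      have "degree E x \<le> n - 1" using dle[OF xV] Mxle by simp
      then show "real (degree E x) \<le> real n - 1" using n1 by (metis of_nat_mono)
    qed
    finally show ?thesis using False by simp
  qed
  have MsV: "Ms \<subseteq> V" unfolding Ms_def max_deg_vertices_def by auto
  have "(\<Sum>x\<in>V. real (degree E x) * ((real Mx)^2 - (real (degree E x))^2))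
      \<le> (\<Sum>x\<in>V. if x \<in> Ms then 0 else C)"
    by (rule sum_mono) (rule termb)
  also have "\<dots> = (\<Sum>x\<in>V - Ms. if x \<in> Ms then 0 else C) + (\<Sum>x\<in>Ms. if x \<in> Ms then 0 else C)"
    by (rule sum.subset_diff[OF MsV finV])
  also have "\<dots> = real (card (V - Ms)) * C" by simp
  also have "real (card (V - Ms)) = real n - real k"
  proof -
    have "card Ms \<le> card V" using MsV finV by (rule card_mono[rotated])
    then show ?thesis unfolding k_def using MsV finV cV
      by (simp add: card_Diff_subset finite_subset of_nat_diff)
  qed
  finally have up: "real t * (real n - real t) * ((real n - 1)^2 - (real t)^2) \<le> (real n - real k) * C"
    using Lr by linarith
  have low: "C * (47/100*real n + 2/100) \<le> real t * (real n - real t) * ((real n - 1)^2 - (real t)^2)"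
    using poly_bound[OF n4] unfolding C_def t_def by simp
  have Cpos: "C > 0" unfolding C_def using n4 by simp
  have "C * (47/100*real n + 2/100) \<le> C * (real n - real k)"
    using up low by (simp add: mult.commute)
  then have "47/100*real n + 2/100 \<le> real n - real k" using Cpos by simp
  then have "real k \<le> 53/100 * real n - 2/100" by simp
  also have "\<dots> \<le> - (2/3) * real n + 3/2 + (1/6) * sqrt (52 * (real n)^2 - 132 * real n + 81)"
    by (rule sqrt_bound) (use n4 in simp)
  finally show ?thesis unfolding k_def Ms_def .
qed

end
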